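(* Let $a,b,c,d\in\mathbb{R}$, let $F(q_1,q_2)=aq_1^3+bq_1^2q_2+cq_1q_2^2+dq_2^3$, and let $L=\{(q,\nabla F(q)):q\in\mathbb{R}^2\}\subset\mathbb{R}^4$. Consider the map $\Psi:\mathbb{R}^2\times\mathbb{R}^2\to\mathbb{R}^4$, $\Psi(q,w)=(q+w,\nabla F(q)+\nabla^2F(q)w)$ (i.e. $\Psi(X,W)=X+W$ on $TL$), let $\Delta$ be its set of critical points and $\Sigma=\Psi(\Delta)$. The following are equivalent: (i) $18abcd+b^2c^2>4ac^3+4b^3d+27a^2d^2$; (ii) $\Delta$ equals the zero section $\{w=0\}$ (and then, in particular, $\Sigma=L$); (iii) every regular value of $\Psi$ has multiplicity $2$. Moreover, the opposite inequality $18abcd+b^2c^2<4ac^3+4b^3d+27a^2d^2$ is equivalent to the multiplicity of $\Psi$ (at regular values) being $0$ and $4$; in this case $\Delta$ is not equal to the zero section.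
   Context: $\mathbb{R}^4$ has coordinates $(q_1,q_2,p_1,p_2)$ and symplectic form $\sum_i dp_i\wedge dq_i$; $L$ is a Lagrangian submanifold, and $TL$ is identified with $\mathbb{R}^2\times\mathbb{R}^2$ via $(q,w)\mapsto$ the tangent vector $(w,\nabla^2F(q)w)$ at $(q,\nabla F(q))$, where $\nabla^2F(q)$ is the Hessian. The image of $\Psi$ is where the outer symplectic billiard correspondence of $L$ is defined. The multiplicity of a regular value is its number of preimages under $\Psi$. *)

theory Defs
  imports "HOL-Analysis.Analysis"
begin

definition cubicF :: "real \<Rightarrow> real \<Rightarrow> real \<Rightarrow> real \<Rightarrow> real^2 \<Rightarrow> real" where
  "cubicF a b c d q = a * (q$1)^3 + b * (q$1)^2 * (q$2) + c * (q$1) * (q$2)^2 + d * (q$2)^3"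

definition gradient :: "(real^2 \<Rightarrow> real) \<Rightarrow> real^2 \<Rightarrow> real^2" where
  "gradient f q = (THE g. (f has_derivative (\<lambda>h. g \<bullet> h)) (at q))"

definition hessian :: "(real^2 \<Rightarrow> real) \<Rightarrow> real^2 \<Rightarrow> real^2^2" where
  "hessian f q = (THE H. (gradient f has_derivative (\<lambda>h. H *v h)) (at q))"

text \<open>R^4 with coordinates (q1,q2,p1,p2) is modelled as real^2 * real^2 (q,p).
  Psi(q,w) = (q + w, grad F(q) + Hess F(q) w).\<close>
definition Psi :: "(real^2 \<Rightarrow> real) \<Rightarrow> (real^2) \<times> (real^2) \<Rightarrow> (real^2) \<times> (real^2)" where
  "Psi f x = (fst x + snd x, gradient f (fst x) + hessian f (fst x) *v snd x)"

definition lagr_graph :: "(real^2 \<Rightarrow> real) \<Rightarrow> ((real^2) \<times> (real^2)) set" where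
  "lagr_graph f = {(q, gradient f q) | q. True}"

definition critical_point :: "('a::real_normed_vector \<Rightarrow> 'b::real_normed_vector) \<Rightarrow> 'a \<Rightarrow> bool" where
  "critical_point g x \<longleftrightarrow> \<not> (\<exists>D. (g has_derivative D) (at x) \<and> surj D)"

definition critical_set :: "('a::real_normed_vector \<Rightarrow> 'b::real_normed_vector) \<Rightarrow> 'a set" where
  "critical_set g = {x. critical_point g x}"

definition critical_values :: "('a::real_normed_vector \<Rightarrow> 'b::real_normed_vector) \<Rightarrow> 'b set" where
  "critical_values g = g ` critical_set g"

definition regular_value :: "('a::real_normed_vector \<Rightarrow> 'b::real_normed_vector) \<Rightarrow> 'b \<Rightarrow> bool" where
  "regular_value g y \<longleftrightarrow> y \<notin> critical_values g"

definition has_multiplicity :: "('a \<Rightarrow> 'b) \<Rightarrow> 'b \<Rightarrow> nat \<Rightarrow> bool" where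
  "has_multiplicity g y n \<longleftrightarrow> finite {x. g x = y} \<and> card {x. g x = y} = n"

definition zero_section :: "((real^2) \<times> (real^2)) set" where
  "zero_section = {x. snd x = 0}"

end

theory Submission
  imports Defs
begin



definition Gv :: "real \<Rightarrow> real \<Rightarrow> real \<Rightarrow> real \<Rightarrow> real^2 \<Rightarrow> real^2" where
  "Gv a b c d q = (3*a*(q$1)^2 + 2*b*(q$1)*(q$2) + c*(q$2)^2) *\<^sub>R axis 1 1
     + (b*(q$1)^2 + 2*c*(q$1)*(q$2) + 3*d*(q$2)^2) *\<^sub>R axis 2 1"

definition Hm :: "real \<Rightarrow> real \<Rightarrow> real \<Rightarrow> real \<Rightarrow> real^2 \<Rightarrow> real^2^2" where
  "Hm a b c d q = vector [vector [6*a*(q$1) + 2*b*(q$2), 2*b*(q$1) + 2*c*(q$2)],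
                          vector [2*b*(q$1) + 2*c*(q$2), 2*c*(q$1) + 6*d*(q$2)]]"

lemma Gv_nth[simp]: "Gv a b c d q $ 1 = 3*a*(q$1)^2 + 2*b*(q$1)*(q$2) + c*(q$2)^2"
   "Gv a b c d q $ 2 = b*(q$1)^2 + 2*c*(q$1)*(q$2) + 3*d*(q$2)^2"
  by (simp_all add: Gv_def axis_def)

lemma Hm_mult_nth[simp]: "(Hm a b c d q *v h) $ 1 = (6*a*(q$1) + 2*b*(q$2)) * h$1 + (2*b*(q$1) + 2*c*(q$2)) * h$2"
  "(Hm a b c d q *v h) $ 2 = (2*b*(q$1) + 2*c*(q$2)) * h$1 + (2*c*(q$1) + 6*d*(q$2)) * h$2"
  by (simp_all add: Hm_def matrix_vector_mult_def sum_2)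

lemma inner2: "(x::real^2) \<bullet> y = x$1 * y$1 + x$2 * y$2"
  by (simp add: inner_vec_def sum_2)

lemma has_derivative_nth[derivative_intros]: "((\<lambda>x::real^2. x$i) has_derivative (\<lambda>h. h$i)) F"
  by (rule bounded_linear_imp_has_derivative) (rule bounded_linear_vec_nth)

lemma cubicF_deriv: "(cubicF a b c d has_derivative (\<lambda>h. Gv a b c d q \<bullet> h)) (at q)"
proof -
  have "(cubicF a b c d has_derivative (\<lambda>h. a * (3 * (q$1)^2 * h$1) + b * ((2 * q$1 * h$1) * q$2 + (q$1)^2 * h$2)
      + c * ((h$1 * (q$2)^2) + q$1 * (2*q$2*h$2)) + d * (3*(q$2)^2*h$2))) (at q)"
    unfolding cubicF_def[abs_def]
    by (auto intro!: derivative_eq_intros simp: power2_eq_square power3_eq_cube algebra_simps)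
  moreover have "(\<lambda>h. a * (3 * (q$1)^2 * h$1) + b * ((2 * q$1 * h$1) * q$2 + (q$1)^2 * h$2)
      + c * ((h$1 * (q$2)^2) + q$1 * (2*q$2*h$2)) + d * (3*(q$2)^2*h$2)) = (\<lambda>h. Gv a b c d q \<bullet> h)"
    by (rule ext) (simp add: inner2 algebra_simps power2_eq_square)
  ultimately show ?thesis by simp
qed

lemma gradient_eq: "gradient (cubicF a b c d) = Gv a b c d"
proof (rule ext)
  fix q
  show "gradient (cubicF a b c d) q = Gv a b c d q"
    unfolding gradient_def
  proof (rule the_equality)
    show "(cubicF a b c d has_derivative (\<lambda>h. Gv a b c d q \<bullet> h)) (at q)" by (rule cubicF_deriv)
  next
    fix g assume "(cubicF a b c d has_derivative (\<lambda>h. g \<bullet> h)) (at q)"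
    then have e: "(\<lambda>h. g \<bullet> h) = (\<lambda>h. Gv a b c d q \<bullet> h)"
      using cubicF_deriv has_derivative_unique by blast
    have "g \<bullet> axis i 1 = Gv a b c d q \<bullet> axis i 1" for i using fun_cong[OF e] by simp
    then show "g = Gv a b c d q" by (simp add: inner_axis vec_eq_iff)
  qed
qed

lemma Gv_deriv: "(Gv a b c d has_derivative (\<lambda>h. Hm a b c d q *v h)) (at q)"
proof -
  have "(Gv a b c d has_derivative (\<lambda>h. (3*a*(2*q$1*h$1) + 2*b*(h$1*q$2 + q$1*h$2) + c*(2*q$2*h$2)) *\<^sub>R axis 1 1
     + (b*(2*q$1*h$1) + 2*c*(h$1*q$2 + q$1*h$2) + 3*d*(2*q$2*h$2)) *\<^sub>R axis 2 1)) (at q)"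
    unfolding Gv_def[abs_def]
    by (auto intro!: derivative_eq_intros simp: power2_eq_square algebra_simps)
  moreover have "(\<lambda>h. (3*a*(2*q$1*h$1) + 2*b*(h$1*q$2 + q$1*h$2) + c*(2*q$2*h$2)) *\<^sub>R axis 1 1
     + (b*(2*q$1*h$1) + 2*c*(h$1*q$2 + q$1*h$2) + 3*d*(2*q$2*h$2)) *\<^sub>R axis 2 1) = (\<lambda>h. Hm a b c d q *v h)"
    by (rule ext) (simp add: vec_eq_iff forall_2 axis_def algebra_simps)
  ultimately show ?thesis by simp
qed

lemma hessian_eq: "hessian (cubicF a b c d) = Hm a b c d"
proof (rule ext)
  fix q
  show "hessian (cubicF a b c d) q = Hm a b c d q"
    unfolding hessian_def gradient_eq
  proof (rule the_equality)
    show "(Gv a b c d has_derivative (\<lambda>h. Hm a b c d q *v h)) (at q)" by (rule Gv_deriv)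
  next
    fix M assume "(Gv a b c d has_derivative (\<lambda>h. M *v h)) (at q)"
    then have e: "(\<lambda>h. M *v h) = (\<lambda>h. Hm a b c d q *v h)"
      using Gv_deriv has_derivative_unique by blast
    then show "M = Hm a b c d q" by (metis matrix_eq)
  qed
qed

lemma Gv_deriv_chain[derivative_intros]:
  "(f has_derivative f') (at x within S) \<Longrightarrow>
   ((\<lambda>x. Gv a b c d (f x)) has_derivative (\<lambda>h. Hm a b c d (f x) *v f' h)) (at x within S)"
  using has_derivative_compose[OF _ Gv_deriv] by blast

lemma Psi_eq: "Psi (cubicF a b c d) = (\<lambda>z. (fst z + snd z, Gv a b c d (fst z + snd z) - Gv a b c d (snd z)))"
proof (rule ext)
  fix z :: "(real^2) \<times> (real^2)"
  obtain q w where z: "z = (q, w)" by fastforce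
  have "Gv a b c d q + Hm a b c d q *v w = Gv a b c d (q + w) - Gv a b c d w"
    unfolding vec_eq_iff forall_2 by (simp add: power2_eq_square algebra_simps)
  then show "Psi (cubicF a b c d) z = (fst z + snd z, Gv a b c d (fst z + snd z) - Gv a b c d (snd z))"
    unfolding Psi_def gradient_eq hessian_eq z by simp
qed

definition dH :: "real \<Rightarrow> real \<Rightarrow> real \<Rightarrow> real \<Rightarrow> real^2 \<Rightarrow> real" where
  "dH a b c d w = (6*a*(w$1) + 2*b*(w$2)) * (2*c*(w$1) + 6*d*(w$2)) - (2*b*(w$1) + 2*c*(w$2))^2"

lemma Psi_deriv: "(Psi (cubicF a b c d) has_derivative
   (\<lambda>z. (fst z + snd z, Hm a b c d (q + w) *v (fst z + snd z) - Hm a b c d w *v snd z))) (at (q, w))"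
  unfolding Psi_eq
  by (auto intro!: derivative_eq_intros)

lemma solve2:
  fixes m11 m12 m22 x1 x2 y1 y2 :: real
  assumes "m11*x1 + m12*x2 = 1" "m12*x1 + m22*x2 = 0" "m11*y1 + m12*y2 = 0" "m12*y1 + m22*y2 = 1"
  shows "(m11*m22 - m12^2) * (x1*y2 - x2*y1) = 1"
  using assms by algebra

lemma lin2a: "(m11::real)*m22 - m12^2 \<noteq> 0 \<Longrightarrow>
   m11 * ((m22*r1 - m12*r2)/(m11*m22 - m12^2)) + m12 * ((m11*r2 - m12*r1)/(m11*m22-m12^2)) = r1"
proof -
  assume h: "m11*m22 - m12^2 \<noteq> 0"
  have "m11 * ((m22*r1 - m12*r2)/(m11*m22 - m12^2)) + m12 * ((m11*r2 - m12*r1)/(m11*m22-m12^2))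
     = (m11 * (m22*r1 - m12*r2) + m12 * (m11*r2 - m12*r1))/(m11*m22-m12^2)"
    by (simp add: add_divide_distrib)
  also have "m11 * (m22*r1 - m12*r2) + m12 * (m11*r2 - m12*r1) = r1 * (m11*m22-m12^2)"
    by (simp add: algebra_simps power2_eq_square)
  finally show ?thesis using h by simp
qed
lemma lin2b: "(m11::real)*m22 - m12^2 \<noteq> 0 \<Longrightarrow>
   m12 * ((m22*r1 - m12*r2)/(m11*m22 - m12^2)) + m22 * ((m11*r2 - m12*r1)/(m11*m22-m12^2)) = r2"
proof -
  assume h: "m11*m22 - m12^2 \<noteq> 0"
  have "m12 * ((m22*r1 - m12*r2)/(m11*m22 - m12^2)) + m22 * ((m11*r2 - m12*r1)/(m11*m22-m12^2))
     = (m12 * (m22*r1 - m12*r2) + m22 * (m11*r2 - m12*r1))/(m11*m22-m12^2)"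
    by (simp add: add_divide_distrib)
  also have "m12 * (m22*r1 - m12*r2) + m22 * (m11*r2 - m12*r1) = r2 * (m11*m22-m12^2)"
    by (simp add: algebra_simps power2_eq_square)
  finally show ?thesis using h by simp
qed

lemma crit_iff: "critical_point (Psi (cubicF a b c d)) (q, w) \<longleftrightarrow> dH a b c d w = 0"
proof -
  let ?D = "(\<lambda>z. (fst z + snd z, Hm a b c d (q + w) *v (fst z + snd z) - Hm a b c d w *v snd z))"
  have "(\<exists>D. (Psi (cubicF a b c d) has_derivative D) (at (q,w)) \<and> surj D) \<longleftrightarrow> surj ?D"
  proof
    assume "\<exists>D. (Psi (cubicF a b c d) has_derivative D) (at (q,w)) \<and> surj D"
    then obtain D where D: "(Psi (cubicF a b c d) has_derivative D) (at (q,w))" "surj D" by blast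
    have "D = ?D" using has_derivative_unique[OF D(1) Psi_deriv] .
    then show "surj ?D" using D(2) by simp
  next
    assume "surj ?D" then show "\<exists>D. (Psi (cubicF a b c d) has_derivative D) (at (q,w)) \<and> surj D"
      using Psi_deriv by blast
  qed
  then have cp: "critical_point (Psi (cubicF a b c d)) (q, w) \<longleftrightarrow> \<not> surj ?D"
    unfolding critical_point_def by blast
  let ?m11 = "6*a*(w$1) + 2*b*(w$2)" and ?m12 = "2*b*(w$1) + 2*c*(w$2)" and ?m22 = "2*c*(w$1) + 6*d*(w$2)"
  have M: "Hm a b c d w *v k = vector [?m11 * k$1 + ?m12 * k$2, ?m12 * k$1 + ?m22 * k$2]" for k
    by (simp add: vec_eq_iff forall_2)
  have "surj ?D \<longleftrightarrow> dH a b c d w \<noteq> 0"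
  proof
    assume s: "surj ?D"
    have ex: "\<exists>k. Hm a b c d w *v k = z" for z
    proof -
      obtain hk where hk: "(0, - z) = ?D hk" using surjD[OF s] by blast
      then have e: "fst hk + snd hk = 0" "Hm a b c d (q+w) *v (fst hk + snd hk) - Hm a b c d w *v snd hk = - z"
        by simp_all
      then have "Hm a b c d w *v snd hk = z" by simp
      then show ?thesis by blast
    qed
    obtain k1 where k1: "Hm a b c d w *v k1 = vector [1,0]" using ex by blast
    obtain k2 where k2: "Hm a b c d w *v k2 = vector [0,1]" using ex by blast
    have "?m11 * k1$1 + ?m12 * k1$2 = 1" "?m12 * k1$1 + ?m22 * k1$2 = 0"
      using k1 unfolding M by (simp_all add: vec_eq_iff forall_2)
    moreover have "?m11 * k2$1 + ?m12 * k2$2 = 0" "?m12 * k2$1 + ?m22 * k2$2 = 1"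
      using k2 unfolding M by (simp_all add: vec_eq_iff forall_2)
    ultimately have "(?m11*?m22 - ?m12^2) * (k1$1*k2$2 - k1$2*k2$1) = 1" by (rule solve2)
    then show "dH a b c d w \<noteq> 0" unfolding dH_def by (metis mult_zero_left zero_neq_one)
  next
    assume nz: "dH a b c d w \<noteq> 0"
    have \<delta>: "dH a b c d w = ?m11*?m22 - ?m12^2" by (simp add: dH_def)
    show "surj ?D"
    proof (rule surjI[where f = "\<lambda>yz. (let y = fst yz; r = Hm a b c d (q + w) *v y - snd yz;
         k = vector [(?m22 * r$1 - ?m12 * r$2) / (?m11*?m22 - ?m12^2), (?m11 * r$2 - ?m12 * r$1) / (?m11*?m22 - ?m12^2)] :: real^2 in (y - k, k))"])
      fix yz :: "(real^2) \<times> (real^2)"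
      obtain y z where yz: "yz = (y, z)" by fastforce
      define r where "r = Hm a b c d (q + w) *v y - z"
      define k :: "real^2" where "k = vector [(?m22 * r$1 - ?m12 * r$2) / (?m11*?m22 - ?m12^2), (?m11 * r$2 - ?m12 * r$1) / (?m11*?m22 - ?m12^2)]"
      have nz': "?m11*?m22 - ?m12^2 \<noteq> 0" using nz \<delta> by simp
      have Mk: "Hm a b c d w *v k = r"
        unfolding M k_def vec_eq_iff forall_2 using lin2a[OF nz'] lin2b[OF nz'] by simp
      have "(let y = fst yz; r = Hm a b c d (q + w) *v y - snd yz;
         k = vector [(?m22 * r$1 - ?m12 * r$2) / (?m11*?m22 - ?m12^2), (?m11 * r$2 - ?m12 * r$1) / (?m11*?m22 - ?m12^2)] :: real^2 in (y - k, k)) = (y - k, k)"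
        unfolding yz Let_def r_def k_def by simp
      moreover have "?D (y - k, k) = yz" unfolding yz using Mk r_def by simp
      ultimately show "?D ((\<lambda>yz. (let y = fst yz; r = Hm a b c d (q + w) *v y - snd yz;
         k = vector [(?m22 * r$1 - ?m12 * r$2) / (?m11*?m22 - ?m12^2), (?m11 * r$2 - ?m12 * r$1) / (?m11*?m22 - ?m12^2)] :: real^2 in (y - k, k))) yz) = yz"
        by simp
    qed
  qed
  then show ?thesis using cp by blast
qed




definition NA :: "('a \<Rightarrow> 'b) \<Rightarrow> 'b \<Rightarrow> 'a set" where "NA G v = {u. G u = v}"
definition RegA :: "('a \<Rightarrow> 'b) \<Rightarrow> ('a \<Rightarrow> real) \<Rightarrow> 'b \<Rightarrow> bool" where
  "RegA G D v \<longleftrightarrow> (\<forall>u. G u = v \<longrightarrow> D u \<noteq> 0)"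
definition crit0 :: "(real \<times> real \<Rightarrow> real) \<Rightarrow> bool" where "crit0 D \<longleftrightarrow> (\<forall>u. D u = 0 \<longrightarrow> u = (0,0))"
definition allm :: "('a \<Rightarrow> 'b) \<Rightarrow> ('a \<Rightarrow> real) \<Rightarrow> nat set \<Rightarrow> bool" where
  "allm G D S \<longleftrightarrow> (\<forall>v. RegA G D v \<longrightarrow> finite (NA G v) \<and> card (NA G v) \<in> S)"
definition exm :: "('a \<Rightarrow> 'b) \<Rightarrow> ('a \<Rightarrow> real) \<Rightarrow> nat \<Rightarrow> bool" where
  "exm G D n \<longleftrightarrow> (\<exists>v. RegA G D v \<and> finite (NA G v) \<and> card (NA G v) = n)"

definition Gf :: "real \<Rightarrow> real \<Rightarrow> real \<Rightarrow> real \<Rightarrow> real \<times> real \<Rightarrow> real \<times> real" where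
  "Gf a b c d u = (3*a*(fst u)^2 + 2*b*(fst u)*(snd u) + c*(snd u)^2, b*(fst u)^2 + 2*c*(fst u)*(snd u) + 3*d*(snd u)^2)"
definition Df :: "real \<Rightarrow> real \<Rightarrow> real \<Rightarrow> real \<Rightarrow> real \<times> real \<Rightarrow> real" where
  "Df a b c d u = (6*a*(fst u) + 2*b*(snd u)) * (2*c*(fst u) + 6*d*(snd u)) - (2*b*(fst u) + 2*c*(snd u))^2"
definition Disc :: "real \<Rightarrow> real \<Rightarrow> real \<Rightarrow> real \<Rightarrow> real" where
  "Disc a b c d = 18*a*b*c*d + b^2*c^2 - 4*a*c^3 - 4*b^3*d - 27*a^2*d^2"

definition Good :: "real \<Rightarrow> real \<Rightarrow> real \<Rightarrow> real \<Rightarrow> bool" where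
  "Good a b c d \<longleftrightarrow>
    (Disc a b c d > 0 \<and> crit0 (Df a b c d) \<and> allm (Gf a b c d) (Df a b c d) {2}) \<or>
    (Disc a b c d < 0 \<and> \<not> crit0 (Df a b c d) \<and> allm (Gf a b c d) (Df a b c d) {0,4}
        \<and> exm (Gf a b c d) (Df a b c d) 0 \<and> exm (Gf a b c d) (Df a b c d) 4) \<or>
    (Disc a b c d = 0 \<and> \<not> crit0 (Df a b c d) \<and> exm (Gf a b c d) (Df a b c d) 0 \<and> \<not> exm (Gf a b c d) (Df a b c d) 4)"

definition ta where "ta p q r t a b c d = a*p^3 + b*p^2*r + c*p*r^2 + d*r^3"
definition tb where "tb p q r t a b c (d::real) = 3*a*p^2*q + b*(p^2*t + 2*p*q*r) + c*(q*r^2 + 2*p*r*t) + 3*d*r^2*t"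
definition tc where "tc p q r t a b c (d::real) = 3*a*p*q^2 + b*(q^2*r + 2*p*q*t) + c*(p*t^2 + 2*q*r*t) + 3*d*r*t^2"
definition td where "td p q r t a b c d = a*q^3 + b*q^2*t + c*q*t^2 + d*t^3"

lemma I1: "Gf (ta p q r t a b c d) (tb p q r t a b c d) (tc p q r t a b c d) (td p q r t a b c d) u =
  (let w = Gf a b c d (p* fst u + q* snd u, r* fst u + t* snd u) in (p* fst w + r* snd w, q* fst w + t* snd w))"
  by (simp add: Gf_def ta_def tb_def tc_def td_def Let_def power2_eq_square power3_eq_cube algebra_simps)

lemma I2: "Df (ta p q r t a b c d) (tb p q r t a b c d) (tc p q r t a b c d) (td p q r t a b c d) u =
  (p*t - q*r)^2 * Df a b c d (p* fst u + q* snd u, r* fst u + t* snd u)"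
  unfolding Df_def ta_def tb_def tc_def td_def prod.sel by algebra

lemma I3: "Disc (ta p q r t a b c d) (tb p q r t a b c d) (tc p q r t a b c d) (td p q r t a b c d) =
  (p*t - q*r)^6 * Disc a b c d"
  unfolding Disc_def ta_def tb_def tc_def td_def by algebra

lemma invariance:
  fixes \<phi> :: "real \<times> real \<Rightarrow> real \<times> real" and \<psi> :: "real \<times> real \<Rightarrow> real \<times> real"
  assumes bp: "bij \<phi>" and bq: "bij \<psi>" and G: "\<And>u. G' u = \<psi> (G (\<phi> u))"
    and D: "\<And>u. D' u = 0 \<longleftrightarrow> D (\<phi> u) = 0" and z: "\<phi> (0,0) = (0,0)"
  shows "crit0 D' = crit0 D" "allm G' D' S = allm G D S" "exm G' D' n = exm G D n"
proof -
  have ip: "inj \<phi>" and sp: "surj \<phi>" using bp bij_is_inj bij_is_surj by auto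
  have iq: "inj \<psi>" and sq: "surj \<psi>" using bq bij_is_inj bij_is_surj by auto
  have allphi: "(\<forall>u. Q (\<phi> u)) \<longleftrightarrow> (\<forall>w. Q w)" for Q
  proof
    assume h: "\<forall>u. Q (\<phi> u)"
    show "\<forall>w. Q w"
    proof
      fix w obtain u where "w = \<phi> u" using surjD[OF sp] by blast
      then show "Q w" using h by blast
    qed
  qed blast
  have eqv: "G' u = v \<longleftrightarrow> G (\<phi> u) = inv \<psi> v" for u v
  proof -
    have "G' u = v \<longleftrightarrow> \<psi> (G (\<phi> u)) = v" by (simp add: G)
    also have "\<dots> \<longleftrightarrow> G (\<phi> u) = inv \<psi> v" using bij_inv_eq_iff[OF bq] by metis
    finally show ?thesis .
  qed
  have bb: "bij_betw \<phi> (NA G' v) (NA G (inv \<psi> v))" for v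
    unfolding bij_betw_def NA_def
  proof
    show "inj_on \<phi> {u. G' u = v}" using inj_on_subset[OF ip subset_UNIV] .
    show "\<phi> ` {u. G' u = v} = {u. G u = inv \<psi> v}"
    proof
      show "\<phi> ` {u. G' u = v} \<subseteq> {u. G u = inv \<psi> v}"
      proof
        fix x assume "x \<in> \<phi> ` {u. G' u = v}"
        then obtain u where "G' u = v" "x = \<phi> u" by blast
        then show "x \<in> {u. G u = inv \<psi> v}" using eqv by blast
      qed
      show "{u. G u = inv \<psi> v} \<subseteq> \<phi> ` {u. G' u = v}"
      proof
        fix w assume w: "w \<in> {u. G u = inv \<psi> v}"
        obtain u where u: "w = \<phi> u" using surjD[OF sp] by blast
        have "G' u = v" using w u eqv by simp
        then show "w \<in> \<phi> ` {u. G' u = v}" using u by blast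
      qed
    qed
  qed
  have fin: "finite (NA G' v) = finite (NA G (inv \<psi> v))" for v using bb bij_betw_finite by blast
  have crd: "card (NA G' v) = card (NA G (inv \<psi> v))" for v using bb bij_betw_same_card by blast
  have reg: "RegA G' D' v = RegA G D (inv \<psi> v)" for v
  proof -
    have "RegA G' D' v \<longleftrightarrow> (\<forall>u. G (\<phi> u) = inv \<psi> v \<longrightarrow> D (\<phi> u) \<noteq> 0)"
      unfolding RegA_def using eqv D by simp
    also have "\<dots> \<longleftrightarrow> RegA G D (inv \<psi> v)"
      unfolding RegA_def by (rule allphi)
    finally show ?thesis .
  qed
  have allv: "(\<forall>v. P (inv \<psi> v)) \<longleftrightarrow> (\<forall>v. P v)" for P
  proof
    assume h: "\<forall>v. P (inv \<psi> v)"
    show "\<forall>v. P v"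
    proof
      fix v have "P (inv \<psi> (\<psi> v))" using h by blast
      then show "P v" using inv_f_f[OF iq] by simp
    qed
  qed blast
  have exv: "(\<exists>v. P (inv \<psi> v)) \<longleftrightarrow> (\<exists>v. P v)" for P
  proof
    assume "\<exists>v. P v"
    then obtain v where "P v" by blast
    then have "P (inv \<psi> (\<psi> v))" using inv_f_f[OF iq] by simp
    then show "\<exists>v. P (inv \<psi> v)" by blast
  qed blast
  show "allm G' D' S = allm G D S"
    unfolding allm_def fin crd reg by (rule allv)
  show "exm G' D' n = exm G D n"
    unfolding exm_def fin crd reg by (rule exv)
  have zz: "u = (0,0) \<longleftrightarrow> \<phi> u = (0,0)" for u using ip z by (metis inj_eq)
  have "crit0 D' \<longleftrightarrow> (\<forall>u. D (\<phi> u) = 0 \<longrightarrow> \<phi> u = (0,0))"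
    unfolding crit0_def using D zz by blast
  also have "\<dots> \<longleftrightarrow> crit0 D" unfolding crit0_def by (rule allphi)
  finally show "crit0 D' = crit0 D" .
qed

lemma inv_aux:
  fixes p q r t x y :: real
  assumes h: "p*t - q*r \<noteq> 0"
  shows "(t*(p*x + q*y) - q*(r*x + t*y))/(p*t - q*r) = x"
    "(p*(r*x + t*y) - r*(p*x + q*y))/(p*t - q*r) = y"
    "p*(t*x - q*y)/(p*t - q*r) + q*(p*y - r*x)/(p*t - q*r) = x"
    "r*(t*x - q*y)/(p*t - q*r) + t*(p*y - r*x)/(p*t - q*r) = y"
proof -
  have "t*(p*x + q*y) - q*(r*x + t*y) = x*(p*t - q*r)" by (simp add: algebra_simps)
  then show "(t*(p*x + q*y) - q*(r*x + t*y))/(p*t - q*r) = x" using h by simp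
  have "p*(r*x + t*y) - r*(p*x + q*y) = y*(p*t - q*r)" by (simp add: algebra_simps)
  then show "(p*(r*x + t*y) - r*(p*x + q*y))/(p*t - q*r) = y" using h by simp
  have "p*(t*x - q*y)/(p*t - q*r) + q*(p*y - r*x)/(p*t - q*r) = (p*(t*x - q*y) + q*(p*y - r*x))/(p*t - q*r)"
    by (simp add: add_divide_distrib)
  also have "p*(t*x - q*y) + q*(p*y - r*x) = x*(p*t - q*r)" by (simp add: algebra_simps)
  finally show "p*(t*x - q*y)/(p*t - q*r) + q*(p*y - r*x)/(p*t - q*r) = x" using h by simp
  have "r*(t*x - q*y)/(p*t - q*r) + t*(p*y - r*x)/(p*t - q*r) = (r*(t*x - q*y) + t*(p*y - r*x))/(p*t - q*r)"
    by (simp add: add_divide_distrib)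
  also have "r*(t*x - q*y) + t*(p*y - r*x) = y*(p*t - q*r)" by (simp add: algebra_simps)
  finally show "r*(t*x - q*y)/(p*t - q*r) + t*(p*y - r*x)/(p*t - q*r) = y" using h by simp
qed

lemma Good_transform:
  assumes det: "p*t - q*r \<noteq> 0"
  shows "Good (ta p q r t a b c d) (tb p q r t a b c d) (tc p q r t a b c d) (td p q r t a b c d) \<longleftrightarrow> Good a b c d"
proof -
  define \<phi> :: "real \<times> real \<Rightarrow> real \<times> real" where "\<phi> u = (p * fst u + q * snd u, r * fst u + t * snd u)" for u
  define \<psi> :: "real \<times> real \<Rightarrow> real \<times> real" where "\<psi> u = (p * fst u + r * snd u, q * fst u + t * snd u)" for u
  define \<phi>' :: "real \<times> real \<Rightarrow> real \<times> real" where
    "\<phi>' u = ((t * fst u - q * snd u)/(p*t - q*r), (p * snd u - r * fst u)/(p*t - q*r))" for u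
  define \<psi>' :: "real \<times> real \<Rightarrow> real \<times> real" where
    "\<psi>' u = ((t * fst u - r * snd u)/(p*t - r*q), (p * snd u - q * fst u)/(p*t - r*q))" for u
  have det': "p*t - r*q \<noteq> 0" using det by (simp add: mult.commute)
  have bp: "bij \<phi>"
    by (rule o_bij[of \<phi>']) (auto simp: \<phi>_def \<phi>'_def fun_eq_iff inv_aux[OF det])
  have bq: "bij \<psi>"
    by (rule o_bij[of \<psi>']) (auto simp: \<psi>_def \<psi>'_def fun_eq_iff inv_aux[OF det'])
  let ?a = "ta p q r t a b c d" and ?b = "tb p q r t a b c d" and ?c = "tc p q r t a b c d" and ?d = "td p q r t a b c d"
  have G: "Gf ?a ?b ?c ?d u = \<psi> (Gf a b c d (\<phi> u))" for u
    unfolding I1 \<phi>_def \<psi>_def by (simp add: Let_def)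
  have D: "Df ?a ?b ?c ?d u = 0 \<longleftrightarrow> Df a b c d (\<phi> u) = 0" for u
    unfolding I2 \<phi>_def using det by simp
  have z: "\<phi> (0,0) = (0,0)" by (simp add: \<phi>_def)
  note inv = invariance[where G'="Gf ?a ?b ?c ?d" and G="Gf a b c d" and D'="Df ?a ?b ?c ?d" and D="Df a b c d", OF bp bq G D z]
  have pos: "(p*t - q*r)^6 > 0" using det
    by (metis (no_types) even_numeral zero_less_power_eq)
  have "Disc ?a ?b ?c ?d > 0 \<longleftrightarrow> Disc a b c d > 0" "Disc ?a ?b ?c ?d < 0 \<longleftrightarrow> Disc a b c d < 0"
     "Disc ?a ?b ?c ?d = 0 \<longleftrightarrow> Disc a b c d = 0"
    unfolding I3 using pos by (auto simp: zero_less_mult_iff mult_less_0_iff)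
  then show ?thesis unfolding Good_def inv by simp
qed




lemma Gf_simp: "Gf a b c d (x, y) = (3*a*x^2 + 2*b*x*y + c*y^2, b*x^2 + 2*c*x*y + 3*d*y^2)"
  by (simp add: Gf_def)
lemma Df_simp: "Df a b c d (x, y) = (6*a*x + 2*b*y) * (2*c*x + 6*d*y) - (2*b*x + 2*c*y)^2"
  by (simp add: Df_def)

lemma card2_le: "card {x, y} \<le> 2"
  by (cases "x = y") auto

lemma Good_N3: "Good \<alpha> 0 0 0"
proof -
  have D0: "Df \<alpha> 0 0 0 u = 0" for u by (simp add: Df_def)
  have nc: "\<not> crit0 (Df \<alpha> 0 0 0)" unfolding crit0_def using D0[of "(0,1)"] by (metis Pair_inject zero_neq_one)
  have e0: "exm (Gf \<alpha> 0 0 0) (Df \<alpha> 0 0 0) 0"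
  proof -
    have N: "NA (Gf \<alpha> 0 0 0) (0,1) = {}" by (auto simp: NA_def Gf_def)
    have "RegA (Gf \<alpha> 0 0 0) (Df \<alpha> 0 0 0) (0,1)" by (auto simp: RegA_def Gf_def)
    then show ?thesis unfolding exm_def using N by (intro exI[of _ "(0,1)"]) simp
  qed
  have n4: "\<not> exm (Gf \<alpha> 0 0 0) (Df \<alpha> 0 0 0) 4"
  proof
    assume "exm (Gf \<alpha> 0 0 0) (Df \<alpha> 0 0 0) 4"
    then obtain v where r: "RegA (Gf \<alpha> 0 0 0) (Df \<alpha> 0 0 0) v" and c: "card (NA (Gf \<alpha> 0 0 0) v) = 4"
      unfolding exm_def by blast
    have "NA (Gf \<alpha> 0 0 0) v = {}" using r D0 unfolding RegA_def NA_def by auto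
    then show False using c by simp
  qed
  have "Disc \<alpha> 0 0 0 = 0" by (simp add: Disc_def)
  then show ?thesis unfolding Good_def using nc e0 n4 by simp
qed

lemma Good_N2: assumes b: "\<beta> \<noteq> 0" shows "Good \<alpha> \<beta> 0 0"
proof -
  have D: "Df \<alpha> \<beta> 0 0 (x, y) = - 4*\<beta>^2*x^2" for x y by (simp add: Df_def power2_eq_square algebra_simps)
  have "Df \<alpha> \<beta> 0 0 (0, 1) = 0" using D[of 0 1] by simp
  then have nc: "\<not> crit0 (Df \<alpha> \<beta> 0 0)" unfolding crit0_def by (metis Pair_inject zero_neq_one)
  have e0: "exm (Gf \<alpha> \<beta> 0 0) (Df \<alpha> \<beta> 0 0) 0"
  proof -
    have N: "NA (Gf \<alpha> \<beta> 0 0) (0,-\<beta>) = {}"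
    proof -
      have "\<beta>*x^2 \<noteq> -\<beta>" for x :: real
      proof
        assume "\<beta>*x^2 = -\<beta>"
        then have "\<beta>*(x^2+1) = 0" by (simp add: algebra_simps)
        then show False using b by (simp add: add_nonneg_eq_0_iff)
      qed
      then show ?thesis by (auto simp: NA_def Gf_def)
    qed
    have "RegA (Gf \<alpha> \<beta> 0 0) (Df \<alpha> \<beta> 0 0) (0,-\<beta>)" using N unfolding RegA_def NA_def by auto
    then show ?thesis unfolding exm_def using N by (intro exI[of _ "(0,-\<beta>)"]) simp
  qed
  have n4: "\<not> exm (Gf \<alpha> \<beta> 0 0) (Df \<alpha> \<beta> 0 0) 4"
  proof
    assume "exm (Gf \<alpha> \<beta> 0 0) (Df \<alpha> \<beta> 0 0) 4"
    then obtain v where r: "RegA (Gf \<alpha> \<beta> 0 0) (Df \<alpha> \<beta> 0 0) v" and c: "card (NA (Gf \<alpha> \<beta> 0 0) v) = 4"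
      unfolding exm_def by blast
    define s where "s = sqrt (snd v / \<beta>)"
    define f where "f x = (fst v - 3*\<alpha>*x^2)/(2*\<beta>*x)" for x
    have sub: "NA (Gf \<alpha> \<beta> 0 0) v \<subseteq> {(s, f s), (-s, f (-s))}"
    proof
      fix u assume u: "u \<in> NA (Gf \<alpha> \<beta> 0 0) v"
      obtain x y where xy: "u = (x, y)" by fastforce
      have g: "3*\<alpha>*x^2 + 2*\<beta>*x*y = fst v" "\<beta>*x^2 = snd v" using u xy by (auto simp: NA_def Gf_def)
      have "Df \<alpha> \<beta> 0 0 (x,y) \<noteq> 0" using r u xy unfolding RegA_def NA_def by auto
      then have x0: "x \<noteq> 0" using D by simp
      have "x^2 = snd v / \<beta>" using g(2) b by (simp add: field_simps)
      then have "\<bar>x\<bar> = s" unfolding s_def by (metis real_sqrt_abs)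
      then have xs: "x = s \<or> x = -s" by auto
      have "y = f x" unfolding f_def using g(1) x0 b by (simp add: field_simps)
      then show "u \<in> {(s, f s), (-s, f (-s))}" using xs xy by auto
    qed
    then have "card (NA (Gf \<alpha> \<beta> 0 0) v) \<le> card {(s, f s), (-s, f (-s))}"
      by (intro card_mono) auto
    also have "\<dots> \<le> 2" by (rule card2_le)
    finally show False using c by simp
  qed
  have "Disc \<alpha> \<beta> 0 0 = 0" by (simp add: Disc_def)
  then show ?thesis unfolding Good_def using nc e0 n4 by simp
qed

lemma sq_eq_cases: "(x::real)^2 = y^2 \<Longrightarrow> x = y \<or> x = -y"
  by (simp add: power2_eq_iff)

lemma Good_diag: assumes ad: "\<alpha> \<noteq> 0" "\<delta> \<noteq> 0" shows "Good \<alpha> 0 0 \<delta>"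
proof -
  have D: "Df \<alpha> 0 0 \<delta> (x, y) = 36*\<alpha>*\<delta>*x*y" for x y by (simp add: Df_def)
  have G: "Gf \<alpha> 0 0 \<delta> (x, y) = (3*\<alpha>*x^2, 3*\<delta>*y^2)" for x y by (simp add: Gf_def)
  have "Df \<alpha> 0 0 \<delta> (1, 0) = 0" using D[of 1 0] by simp
  then have nc: "\<not> crit0 (Df \<alpha> 0 0 \<delta>)" unfolding crit0_def by (metis Pair_inject zero_neq_one)
  have Nchar: "NA (Gf \<alpha> 0 0 \<delta>) (3*\<alpha>*x0^2, 3*\<delta>*y0^2) = {(x0,y0),(-x0,y0),(x0,-y0),(-x0,-y0)}" for x0 y0
  proof -
    have i1: "(x,y) \<in> NA (Gf \<alpha> 0 0 \<delta>) (3*\<alpha>*x0^2, 3*\<delta>*y0^2) \<longleftrightarrow> x^2 = x0^2 \<and> y^2 = y0^2" for x y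
      unfolding NA_def using ad by (simp add: G)
    have i2: "x^2 = x0^2 \<and> y^2 = y0^2 \<longleftrightarrow> (x,y) \<in> {(x0,y0),(-x0,y0),(x0,-y0),(-x0,-y0)}" for x y
      by (auto simp: power2_eq_iff)
    show ?thesis
    proof (rule set_eqI)
      fix u :: "real \<times> real"
      obtain x y where u: "u = (x,y)" by fastforce
      show "u \<in> NA (Gf \<alpha> 0 0 \<delta>) (3*\<alpha>*x0^2, 3*\<delta>*y0^2) \<longleftrightarrow> u \<in> {(x0,y0),(-x0,y0),(x0,-y0),(-x0,-y0)}"
        unfolding u using i1[of x y] i2[of x y] by (rule trans)
    qed
  qed
  have c4: "card {(x0,y0),(-x0,y0),(x0,-y0),(-x0,-y0)} = 4" if "x0 \<noteq> 0" "y0 \<noteq> 0" for x0 y0 :: real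
    using that by auto
  have am: "allm (Gf \<alpha> 0 0 \<delta>) (Df \<alpha> 0 0 \<delta>) {0,4}"
    unfolding allm_def
  proof (intro allI impI)
    fix v assume r: "RegA (Gf \<alpha> 0 0 \<delta>) (Df \<alpha> 0 0 \<delta>) v"
    show "finite (NA (Gf \<alpha> 0 0 \<delta>) v) \<and> card (NA (Gf \<alpha> 0 0 \<delta>) v) \<in> {0, 4}"
    proof (cases "NA (Gf \<alpha> 0 0 \<delta>) v = {}")
      case True then show ?thesis by simp
    next
      case False
      then obtain x0 y0 where u: "(x0,y0) \<in> NA (Gf \<alpha> 0 0 \<delta>) v" by auto
      then have v: "v = (3*\<alpha>*x0^2, 3*\<delta>*y0^2)" by (simp add: NA_def G)
      have "Df \<alpha> 0 0 \<delta> (x0,y0) \<noteq> 0" using r u unfolding RegA_def NA_def by auto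
      then have "x0 \<noteq> 0" "y0 \<noteq> 0" using D by auto
      then show ?thesis unfolding v Nchar using c4 by simp
    qed
  qed
  have e0: "exm (Gf \<alpha> 0 0 \<delta>) (Df \<alpha> 0 0 \<delta>) 0"
  proof -
    have N: "NA (Gf \<alpha> 0 0 \<delta>) (-3*\<alpha>, -3*\<delta>) = {}"
    proof -
      have "3*\<alpha>*x^2 \<noteq> -3*\<alpha>" for x :: real
      proof
        assume "3*\<alpha>*x^2 = -3*\<alpha>"
        then have "\<alpha>*(x^2+1) = 0" by (simp add: algebra_simps)
        then show False using ad by (simp add: add_nonneg_eq_0_iff)
      qed
      then show ?thesis by (auto simp: NA_def G)
    qed
    have "RegA (Gf \<alpha> 0 0 \<delta>) (Df \<alpha> 0 0 \<delta>) (-3*\<alpha>, -3*\<delta>)" using N unfolding RegA_def NA_def by auto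
    then show ?thesis unfolding exm_def using N by (intro exI[of _ "(-3*\<alpha>, -3*\<delta>)"]) simp
  qed
  have e4: "exm (Gf \<alpha> 0 0 \<delta>) (Df \<alpha> 0 0 \<delta>) 4"
  proof -
    have N: "NA (Gf \<alpha> 0 0 \<delta>) (3*\<alpha>*1^2, 3*\<delta>*1^2) = {(1,1),(-1,1),(1,-1),(-1,-1)}" by (rule Nchar)
    have "RegA (Gf \<alpha> 0 0 \<delta>) (Df \<alpha> 0 0 \<delta>) (3*\<alpha>*1^2, 3*\<delta>*1^2)"
      unfolding RegA_def
    proof (intro allI impI)
      fix u assume "Gf \<alpha> 0 0 \<delta> u = (3*\<alpha>*1^2, 3*\<delta>*1^2)"
      then have "u \<in> {(1,1),(-1,1),(1,-1),(-1,-1)}" using N unfolding NA_def by blast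
      then show "Df \<alpha> 0 0 \<delta> u \<noteq> 0" using ad by (auto simp: D)
    qed
    moreover have "card {(1::real,1::real),(-1,1),(1,-1),(-1,-1)} = 4" using c4[of 1 1] by simp
    ultimately show ?thesis unfolding exm_def using N by (intro exI[of _ "(3*\<alpha>*1^2, 3*\<delta>*1^2)"]) simp
  qed
  have "Disc \<alpha> 0 0 \<delta> = -27*\<alpha>^2*\<delta>^2" by (simp add: Disc_def)
  also have "\<dots> < 0" using ad by simp
  finally show ?thesis unfolding Good_def using nc am e0 e4 by simp
qed




lemma uniq_pm:
  fixes e x y x' y' :: real
  assumes e: "e > 0" and h1: "x^2 - e*y^2 = x'^2 - e*y'^2" and h2: "x*y = x'*y'"
  shows "(x' = x \<and> y' = y) \<or> (x' = -x \<and> y' = -y)"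
proof -
  have "(x^2 + e*y^2)^2 = (x^2 - e*y^2)^2 + 4*e*(x*y)^2" by (simp add: power2_eq_square algebra_simps)
  also have "\<dots> = (x'^2 - e*y'^2)^2 + 4*e*(x'*y')^2" using h1 h2 by simp
  also have "\<dots> = (x'^2 + e*y'^2)^2" by (simp add: power2_eq_square algebra_simps)
  finally have "(x^2 + e*y^2)^2 = (x'^2 + e*y'^2)^2" .
  moreover have "x^2 + e*y^2 \<ge> 0" "x'^2 + e*y'^2 \<ge> 0" using e by simp_all
  ultimately have "x^2 + e*y^2 = x'^2 + e*y'^2" by (simp add: power2_eq_iff_nonneg)
  with h1 have hx: "x^2 = x'^2" and "e*y^2 = e*y'^2" by linarith+
  then have hy: "y^2 = y'^2" using e by simp
  from hx have X: "x' = x \<or> x' = -x" by (auto simp: power2_eq_iff)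
  from hy have Y: "y' = y \<or> y' = -y" by (auto simp: power2_eq_iff)
  show ?thesis
  proof (cases "x = 0 \<or> y = 0")
    case True
    then show ?thesis using X Y by auto
  next
    case False
    then have "x*y \<noteq> 0" by simp
    then show ?thesis using X Y h2 by auto
  qed
qed

lemma Good_N1m: assumes ag: "\<alpha> * \<gamma> < 0" shows "Good \<alpha> 0 \<gamma> 0"
proof -
  have a0: "\<alpha> \<noteq> 0" and g0: "\<gamma> \<noteq> 0" using ag by auto
  have D: "Df \<alpha> 0 \<gamma> 0 (x, y) = 12*(\<alpha>*\<gamma>)*x^2 - 4*\<gamma>^2*y^2" for x y
    by (simp add: Df_def power2_eq_square algebra_simps)
  have G: "Gf \<alpha> 0 \<gamma> 0 (x, y) = (3*\<alpha>*x^2 + \<gamma>*y^2, 2*\<gamma>*x*y)" for x y by (simp add: Gf_def)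
  have cr: "crit0 (Df \<alpha> 0 \<gamma> 0)"
    unfolding crit0_def
  proof (intro allI impI)
    fix u :: "real \<times> real" assume h: "Df \<alpha> 0 \<gamma> 0 u = 0"
    obtain x y where u: "u = (x, y)" by fastforce
    have t1: "12*(\<alpha>*\<gamma>)*x^2 \<le> 0" using ag by (simp add: mult_nonpos_nonneg)
    have t2: "4*\<gamma>^2*y^2 \<ge> 0" by simp
    have "12*(\<alpha>*\<gamma>)*x^2 - 4*\<gamma>^2*y^2 = 0" using h u D by simp
    then have "12*(\<alpha>*\<gamma>)*x^2 = 0" "4*\<gamma>^2*y^2 = 0" using t1 t2 by linarith+
    then have "x = 0" "y = 0" using ag g0 by auto
    then show "u = (0,0)" using u by simp
  qed
  define e where "e = - \<gamma> / (3*\<alpha>)"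
  have e0: "e > 0"
  proof -
    have "\<gamma> / (3*\<alpha>) = (\<alpha>*\<gamma>) / (3*\<alpha>^2)" using a0 by (simp add: power2_eq_square)
    also have "\<dots> < 0" using ag a0 by (simp add: divide_neg_pos)
    finally show ?thesis unfolding e_def by simp
  qed
  have ge: "\<gamma> = -3*\<alpha>*e" unfolding e_def using a0 by simp
  define k where "k = sqrt e"
  have k0: "k > 0" unfolding k_def using e0 by simp
  have kk: "k^2 = e" unfolding k_def using e0 by simp
  have uniq: "(x' = x \<and> y' = y) \<or> (x' = -x \<and> y' = -y)"
    if "Gf \<alpha> 0 \<gamma> 0 (x, y) = Gf \<alpha> 0 \<gamma> 0 (x', y')" for x y x' y'
  proof (rule uniq_pm[OF e0])
    have "3*\<alpha>*x^2 + \<gamma>*y^2 = 3*\<alpha>*x'^2 + \<gamma>*y'^2" "2*\<gamma>*x*y = 2*\<gamma>*x'*y'" using that G by auto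
    then have "3*\<alpha>*(x^2 - e*y^2) = 3*\<alpha>*(x'^2 - e*y'^2)" "x*y = x'*y'" using g0 unfolding ge
      by (simp_all add: algebra_simps)
    then show "x^2 - e*y^2 = x'^2 - e*y'^2" "x*y = x'*y'" using a0 by simp_all
  qed
  have am: "allm (Gf \<alpha> 0 \<gamma> 0) (Df \<alpha> 0 \<gamma> 0) {2}"
    unfolding allm_def
  proof (intro allI impI)
    fix v assume r: "RegA (Gf \<alpha> 0 \<gamma> 0) (Df \<alpha> 0 \<gamma> 0) v"
    have v0: "v \<noteq> (0,0)"
    proof
      assume "v = (0,0)"
      then have "Gf \<alpha> 0 \<gamma> 0 (0,0) = v" by (simp add: G)
      then have "Df \<alpha> 0 \<gamma> 0 (0,0) \<noteq> 0" using r unfolding RegA_def by blast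
      then show False by (simp add: D)
    qed
    define z where "z = csqrt (Complex (fst v / (3*\<alpha>)) (- snd v / (3*\<alpha>*k)))"
    have zz: "z * z = Complex (fst v / (3*\<alpha>)) (- snd v / (3*\<alpha>*k))"
      unfolding z_def using power2_csqrt by (metis power2_eq_square)
    then have re: "Re z * Re z - Im z * Im z = fst v / (3*\<alpha>)" and im: "2 * Re z * Im z = - snd v / (3*\<alpha>*k)"
      by (simp_all add: complex_eq_iff mult.commute mult.left_commute)
    define x0 where "x0 = Re z"
    define y0 where "y0 = Im z / k"
    have Gx: "Gf \<alpha> 0 \<gamma> 0 (x0, y0) = v"
    proof -
      have "3*\<alpha>*x0^2 + \<gamma>*y0^2 = 3*\<alpha>*(Re z * Re z - Im z * Im z)"
        unfolding x0_def y0_def ge using k0 kk[symmetric]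
        by (simp add: power2_eq_square field_simps)
      also have "\<dots> = fst v" using re a0 by simp
      finally have 1: "3*\<alpha>*x0^2 + \<gamma>*y0^2 = fst v" .
      have "2*\<gamma>*x0*y0 = -3*\<alpha>*k*(2 * Re z * Im z)"
        unfolding x0_def y0_def ge using k0 kk[symmetric]
        by (simp add: power2_eq_square field_simps)
      also have "\<dots> = snd v" using im a0 k0 by simp
      finally have 2: "2*\<gamma>*x0*y0 = snd v" .
      show ?thesis using 1 2 G by (simp add: prod_eq_iff)
    qed
    have Gm: "Gf \<alpha> 0 \<gamma> 0 (-x0, -y0) = v" using Gx by (simp add: G)
    have ne: "(x0, y0) \<noteq> (-x0, -y0)"
    proof
      assume "(x0, y0) = (-x0, -y0)"
      then have "x0 = 0" "y0 = 0" by auto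
      then show False using Gx v0 by (simp add: G)
    qed
    have N: "NA (Gf \<alpha> 0 \<gamma> 0) v = {(x0, y0), (-x0, -y0)}"
    proof (rule set_eqI)
      fix u :: "real \<times> real"
      obtain x y where u: "u = (x,y)" by fastforce
      show "u \<in> NA (Gf \<alpha> 0 \<gamma> 0) v \<longleftrightarrow> u \<in> {(x0, y0), (-x0, -y0)}"
      proof
        assume "u \<in> NA (Gf \<alpha> 0 \<gamma> 0) v"
        then have "Gf \<alpha> 0 \<gamma> 0 (x0, y0) = Gf \<alpha> 0 \<gamma> 0 (x, y)" using Gx u by (simp add: NA_def)
        then have "(x = x0 \<and> y = y0) \<or> (x = -x0 \<and> y = -y0)" by (rule uniq)
        then show "u \<in> {(x0, y0), (-x0, -y0)}" using u by auto
      next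
        assume "u \<in> {(x0, y0), (-x0, -y0)}"
        then show "u \<in> NA (Gf \<alpha> 0 \<gamma> 0) v" using Gx Gm by (auto simp: NA_def)
      qed
    qed
    show "finite (NA (Gf \<alpha> 0 \<gamma> 0) v) \<and> card (NA (Gf \<alpha> 0 \<gamma> 0) v) \<in> {2}"
      unfolding N using ne by simp
  qed
  have "Disc \<alpha> 0 \<gamma> 0 = -4*(\<alpha>*\<gamma>)*\<gamma>^2" by (simp add: Disc_def power2_eq_square power3_eq_cube)
  also have "\<dots> > 0" using ag g0 by (simp add: mult_neg_pos)
  finally show ?thesis unfolding Good_def using cr am by simp
qed




lemma cubic_root_monic: "\<exists>x::real. x^3 + B*x^2 + C*x + D = 0"
proof -
  define S where "S = \<bar>B\<bar> + \<bar>C\<bar> + \<bar>D\<bar>"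
  define M where "M = 1 + S"
  have S0: "S \<ge> 0" unfolding S_def by simp
  have M1: "M \<ge> 1" unfolding M_def using S0 by simp
  have MM: "M \<le> M^2" using M1 by (simp add: power2_eq_square)
  have M2: "1 \<le> M^2" using M1 MM by linarith
  have lb: "X * Y \<ge> - \<bar>X\<bar> * Y" if "Y \<ge> 0" for X Y :: real
  proof -
    have "\<bar>X*Y\<bar> = \<bar>X\<bar>*Y" using that by (simp add: abs_mult)
    then show ?thesis using abs_ge_minus_self[of "X*Y"] by linarith
  qed
  have ub: "X * Y \<le> \<bar>X\<bar> * Y" if "Y \<ge> 0" for X Y :: real
  proof -
    have "\<bar>X*Y\<bar> = \<bar>X\<bar>*Y" using that by (simp add: abs_mult)
    then show ?thesis using abs_ge_self[of "X*Y"] by linarith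
  qed
  have fM: "M^3 + B*M^2 + C*M + D \<ge> 0"
  proof -
    have 1: "B*M^2 \<ge> -\<bar>B\<bar>*M^2" by (rule lb) simp
    have 2: "C*M \<ge> -\<bar>C\<bar>*M^2"
    proof -
      have "C*M \<ge> -\<bar>C\<bar>*M" by (rule lb) (use M1 in simp)
      moreover have "\<bar>C\<bar>*M \<le> \<bar>C\<bar>*M^2" using MM by (simp add: mult_left_mono)
      ultimately show ?thesis by linarith
    qed
    have 3: "D \<ge> -\<bar>D\<bar>*M^2"
    proof -
      have "\<bar>D\<bar> \<le> \<bar>D\<bar>*M^2" using M2 by (metis abs_ge_zero mult_left_mono mult.right_neutral)
      then show ?thesis by linarith
    qed
    have "M^3 = M^2 * (1 + S)" unfolding M_def by (simp add: power2_eq_square power3_eq_cube)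
    then have e: "M^3 - \<bar>B\<bar> * M^2 - \<bar>C\<bar> * M^2 - \<bar>D\<bar> * M^2 = M^2" unfolding S_def by (simp add: algebra_simps)
    have "M^2 \<ge> 0" by simp
    then show ?thesis using 1 2 3 e by linarith
  qed
  have fmM: "(-M)^3 + B*(-M)^2 + C*(-M) + D \<le> 0"
  proof -
    have 1: "B*M^2 \<le> \<bar>B\<bar>*M^2" by (rule ub) simp
    have 2: "-C*M \<le> \<bar>C\<bar>*M^2"
    proof -
      have "(-C)*M \<le> \<bar>-C\<bar>*M" by (rule ub) (use M1 in simp)
      moreover have "\<bar>C\<bar>*M \<le> \<bar>C\<bar>*M^2" using MM by (simp add: mult_left_mono)
      ultimately show ?thesis by simp
    qed
    have 3: "D \<le> \<bar>D\<bar>*M^2"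
    proof -
      have "\<bar>D\<bar> \<le> \<bar>D\<bar>*M^2" using M2 by (metis abs_ge_zero mult_left_mono mult.right_neutral)
      then show ?thesis by linarith
    qed
    have "M^3 = M^2 * (1 + S)" unfolding M_def by (simp add: power2_eq_square power3_eq_cube)
    then have e: "M^3 - \<bar>B\<bar> * M^2 - \<bar>C\<bar> * M^2 - \<bar>D\<bar> * M^2 = M^2" unfolding S_def by (simp add: algebra_simps)
    have "M^2 \<ge> 0" by simp
    then have "-(M^3) + B*M^2 + (-C*M) + D \<le> 0" using 1 2 3 e by linarith
    moreover have "(-M)^3 + B*(-M)^2 + C*(-M) + D = -(M^3) + B*M^2 + (-C*M) + D" by simp
    ultimately show ?thesis by simp
  qed
  have "\<exists>x\<ge>-M. x \<le> M \<and> x^3 + B*x^2 + C*x + D = 0"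
    by (rule IVT') (use fM fmM M1 in \<open>auto intro!: continuous_intros\<close>)
  then show ?thesis by blast
qed

lemma cubic_root: assumes "a \<noteq> 0" shows "\<exists>x::real. a*x^3 + b*x^2 + c*x + d = 0"
proof -
  obtain x where "x^3 + (b/a)*x^2 + (c/a)*x + d/a = 0" using cubic_root_monic by blast
  then have "a * (x^3 + (b/a)*x^2 + (c/a)*x + d/a) = 0" by simp
  then have "a*x^3 + b*x^2 + c*x + d = 0" using assms by (simp add: algebra_simps)
  then show ?thesis by blast
qed

lemma Good_c0: "Good a b 0 0"
proof (cases "b = 0")
  case True then show ?thesis using Good_N3[of a] by simp
next
  case False then show ?thesis by (rule Good_N2)
qed

lemma Good_N1: assumes c: "c \<noteq> 0" shows "Good \<alpha> 0 c 0"
proof (cases "\<alpha> * c < 0")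
  case True then show ?thesis by (rule Good_N1m)
next
  case False
  show ?thesis
  proof (cases "\<alpha> = 0")
    case True
    have g: "Good 0 c 0 0" using Good_N2 c by blast
    have e: "ta 0 1 1 0 0 0 c 0 = 0" "tb 0 1 1 0 0 0 c 0 = c" "tc 0 1 1 0 0 0 c 0 = 0" "td 0 1 1 0 0 0 c 0 = 0"
      by (simp_all add: ta_def tb_def tc_def td_def)
    have det: "0 * 0 - 1 * 1 \<noteq> (0::real)" by simp
    have "Good 0 0 c 0" using Good_transform[OF det, of 0 0 c 0] g unfolding e by simp
    then show ?thesis using True by simp
  next
    case a0: False
    with False c have pos: "c / (3*\<alpha>) > 0"
      by (metis divide_pos_pos linorder_neqE_linordered_idom mult_less_0_iff mult_pos_pos zero_less_divide_iff zero_less_numeral)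
    define m where "m = sqrt (c / (3*\<alpha>))"
    have m0: "m > 0" unfolding m_def using pos by simp
    have cm: "c = 3*\<alpha>*m^2" unfolding m_def using pos a0 by simp
    let ?p = "1/2::real" and ?q = "1/2::real" and ?r = "1/(2*m)" and ?t = "-1/(2*m)"
    have det: "?p * ?t - ?q * ?r \<noteq> 0" using m0 by (simp add: field_simps)
    have eq: "ta ?p ?q ?r ?t \<alpha> 0 c 0 = \<alpha>/2" "tb ?p ?q ?r ?t \<alpha> 0 c 0 = 0"
         "tc ?p ?q ?r ?t \<alpha> 0 c 0 = 0" "td ?p ?q ?r ?t \<alpha> 0 c 0 = \<alpha>/2"
      unfolding ta_def tb_def tc_def td_def cm using m0 by (simp_all add: field_simps power2_eq_square power3_eq_cube)
    have "Good (\<alpha>/2) 0 0 (\<alpha>/2)" using a0 by (intro Good_diag) simp_all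
    then have "Good (ta ?p ?q ?r ?t \<alpha> 0 c 0) (tb ?p ?q ?r ?t \<alpha> 0 c 0) (tc ?p ?q ?r ?t \<alpha> 0 c 0) (td ?p ?q ?r ?t \<alpha> 0 c 0)"
      unfolding eq .
    then show ?thesis using Good_transform[OF det, of \<alpha> 0 c 0] by blast
  qed
qed

lemma Good_d0: "Good a b c 0"
proof (cases "c = 0")
  case True then show ?thesis using Good_c0 by simp
next
  case False
  define \<sigma> where "\<sigma> = - b / (2*c)"
  have det: "1 * 1 - 0 * \<sigma> \<noteq> (0::real)" by simp
  have e: "ta 1 0 \<sigma> 1 a b c 0 = a + b*\<sigma> + c*\<sigma>^2" "tb 1 0 \<sigma> 1 a b c 0 = 0"
       "tc 1 0 \<sigma> 1 a b c 0 = c" "td 1 0 \<sigma> 1 a b c 0 = 0"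
    unfolding ta_def tb_def tc_def td_def \<sigma>_def using False by (simp_all add: field_simps)
  have "Good (a + b*\<sigma> + c*\<sigma>^2) 0 c 0" using Good_N1 False by blast
  then have "Good (ta 1 0 \<sigma> 1 a b c 0) (tb 1 0 \<sigma> 1 a b c 0) (tc 1 0 \<sigma> 1 a b c 0) (td 1 0 \<sigma> 1 a b c 0)"
    unfolding e .
  then show ?thesis using Good_transform[OF det, of a b c 0] by blast
qed

theorem Good_all: "Good a b c d"
proof (cases "d = 0")
  case True then show ?thesis using Good_d0 by simp
next
  case d0: False
  show ?thesis
  proof (cases "a = 0")
    case True
    have "Good d c b 0" by (rule Good_d0)
    moreover have e: "ta 0 1 1 0 a b c d = d" "tb 0 1 1 0 a b c d = c" "tc 0 1 1 0 a b c d = b" "td 0 1 1 0 a b c d = 0"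
      using True by (simp_all add: ta_def tb_def tc_def td_def)
    ultimately have "Good (ta 0 1 1 0 a b c d) (tb 0 1 1 0 a b c d) (tc 0 1 1 0 a b c d) (td 0 1 1 0 a b c d)"
      unfolding e by simp
    moreover have det: "0 * 0 - 1 * 1 \<noteq> (0::real)" by simp
    ultimately show ?thesis using Good_transform[OF det, of a b c d] by blast
  next
    case False
    obtain \<sigma> where r: "a*\<sigma>^3 + b*\<sigma>^2 + c*\<sigma> + d = 0" using cubic_root[OF False] by blast
    have det: "1 * 1 - \<sigma> * 0 \<noteq> (0::real)" by simp
    have e: "td 1 \<sigma> 0 1 a b c d = 0" using r by (simp add: td_def)
    have "Good (ta 1 \<sigma> 0 1 a b c d) (tb 1 \<sigma> 0 1 a b c d) (tc 1 \<sigma> 0 1 a b c d) 0" by (rule Good_d0)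
    then have "Good (ta 1 \<sigma> 0 1 a b c d) (tb 1 \<sigma> 0 1 a b c d) (tc 1 \<sigma> 0 1 a b c d) (td 1 \<sigma> 0 1 a b c d)"
      unfolding e .
    then show ?thesis using Good_transform[OF det, of a b c d] by blast
  qed
qed




definition toP :: "real^2 \<Rightarrow> real \<times> real" where "toP w = (w$1, w$2)"

lemma toP_vector[simp]: "toP (vector [x, y]) = (x, y)" by (simp add: toP_def)
lemma vector_toP: "vector [fst (toP w), snd (toP w)] = w"
  by (simp add: toP_def vec_eq_iff forall_2)
lemma toP_inj: "toP w = toP w' \<longleftrightarrow> w = w'"
  by (auto simp: toP_def vec_eq_iff forall_2)
lemma toP_zero: "toP w = (0,0) \<longleftrightarrow> w = 0"
  by (auto simp: toP_def vec_eq_iff forall_2)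
lemma dH_toP: "dH a b c d w = Df a b c d (toP w)"
  by (simp add: dH_def Df_def toP_def)
lemma Gv_toP: "toP (Gv a b c d w) = Gf a b c d (toP w)"
  by (simp add: Gf_def toP_def)
lemma Gv_eq_iff: "Gv a b c d w = V \<longleftrightarrow> Gf a b c d (toP w) = toP V"
  by (metis Gv_toP toP_inj)
lemma Gv0: "Gv a b c d 0 = 0" by (simp add: Gv_def)
lemma dH0: "dH a b c d 0 = 0" by (simp add: dH_def)

lemma allP: "(\<forall>w. Q (toP w)) \<longleftrightarrow> (\<forall>u. Q u)"
  by (metis toP_vector surj_pair)

lemma crit_set: "critical_set (Psi (cubicF a b c d)) = {z. dH a b c d (snd z) = 0}"
  unfolding critical_set_def using crit_iff by (metis (no_types, lifting) prod.collapse)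

abbreviation "VV a b c d y \<equiv> toP (Gv a b c d (fst y) - snd y)"

lemma Psi_eq_y: "Psi (cubicF a b c d) z = y \<longleftrightarrow> fst z = fst y - snd z \<and> Gv a b c d (snd z) = Gv a b c d (fst y) - snd y"
proof -
  have "Psi (cubicF a b c d) z = y \<longleftrightarrow> fst z + snd z = fst y \<and> Gv a b c d (fst z + snd z) - Gv a b c d (snd z) = snd y"
    unfolding Psi_eq by (simp add: prod_eq_iff)
  also have "\<dots> \<longleftrightarrow> fst z = fst y - snd z \<and> Gv a b c d (snd z) = Gv a b c d (fst y) - snd y"
    by (auto simp: algebra_simps)
  finally show ?thesis .
qed

lemma reg_iff: "regular_value (Psi (cubicF a b c d)) y \<longleftrightarrow> RegA (Gf a b c d) (Df a b c d) (VV a b c d y)"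
proof -
  have "regular_value (Psi (cubicF a b c d)) y \<longleftrightarrow> (\<forall>z. dH a b c d (snd z) = 0 \<longrightarrow> Psi (cubicF a b c d) z \<noteq> y)"
    unfolding regular_value_def critical_values_def crit_set by blast
  also have "\<dots> \<longleftrightarrow> (\<forall>w. Gv a b c d w = Gv a b c d (fst y) - snd y \<longrightarrow> dH a b c d w \<noteq> 0)"
  proof
    assume h: "\<forall>z. dH a b c d (snd z) = 0 \<longrightarrow> Psi (cubicF a b c d) z \<noteq> y"
    show "\<forall>w. Gv a b c d w = Gv a b c d (fst y) - snd y \<longrightarrow> dH a b c d w \<noteq> 0"
    proof (intro allI impI notI)
      fix w assume "Gv a b c d w = Gv a b c d (fst y) - snd y" "dH a b c d w = 0"
      then have "Psi (cubicF a b c d) (fst y - w, w) = y" "dH a b c d (snd (fst y - w, w)) = 0"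
        unfolding Psi_eq_y by simp_all
      then show False using h by blast
    qed
  next
    assume h: "\<forall>w. Gv a b c d w = Gv a b c d (fst y) - snd y \<longrightarrow> dH a b c d w \<noteq> 0"
    show "\<forall>z. dH a b c d (snd z) = 0 \<longrightarrow> Psi (cubicF a b c d) z \<noteq> y"
      using h unfolding Psi_eq_y by blast
  qed
  also have "\<dots> \<longleftrightarrow> (\<forall>w. Gf a b c d (toP w) = VV a b c d y \<longrightarrow> Df a b c d (toP w) \<noteq> 0)"
    unfolding Gv_eq_iff dH_toP ..
  also have "\<dots> \<longleftrightarrow> RegA (Gf a b c d) (Df a b c d) (VV a b c d y)"
    unfolding RegA_def by (rule allP)
  finally show ?thesis .
qed

lemma mult_iff: "has_multiplicity (Psi (cubicF a b c d)) y n \<longleftrightarrow>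
   finite (NA (Gf a b c d) (VV a b c d y)) \<and> card (NA (Gf a b c d) (VV a b c d y)) = n"
proof -
  have bb: "bij_betw (\<lambda>z. toP (snd z)) {z. Psi (cubicF a b c d) z = y} (NA (Gf a b c d) (VV a b c d y))"
    unfolding bij_betw_def
  proof
    show "inj_on (\<lambda>z. toP (snd z)) {z. Psi (cubicF a b c d) z = y}"
    proof (rule inj_onI)
      fix z z' assume "z \<in> {z. Psi (cubicF a b c d) z = y}" "z' \<in> {z. Psi (cubicF a b c d) z = y}"
        and e: "toP (snd z) = toP (snd z')"
      then have "fst z = fst y - snd z" "fst z' = fst y - snd z'" "snd z = snd z'"
        unfolding Psi_eq_y toP_inj by auto
      then show "z = z'" by (simp add: prod_eq_iff)
    qed
    show "(\<lambda>z. toP (snd z)) ` {z. Psi (cubicF a b c d) z = y} = NA (Gf a b c d) (VV a b c d y)"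
    proof
      show "(\<lambda>z. toP (snd z)) ` {z. Psi (cubicF a b c d) z = y} \<subseteq> NA (Gf a b c d) (VV a b c d y)"
        unfolding NA_def Psi_eq_y Gv_eq_iff by auto
      show "NA (Gf a b c d) (VV a b c d y) \<subseteq> (\<lambda>z. toP (snd z)) ` {z. Psi (cubicF a b c d) z = y}"
      proof
        fix u assume u: "u \<in> NA (Gf a b c d) (VV a b c d y)"
        define w :: "real^2" where "w = vector [fst u, snd u]"
        have tw: "toP w = u" unfolding w_def by simp
        have "Gv a b c d w = Gv a b c d (fst y) - snd y" unfolding Gv_eq_iff tw using u by (simp add: NA_def)
        then have "Psi (cubicF a b c d) (fst y - w, w) = y" unfolding Psi_eq_y by simp
        then show "u \<in> (\<lambda>z. toP (snd z)) ` {z. Psi (cubicF a b c d) z = y}"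
          using tw by (metis (mono_tags, lifting) image_eqI mem_Collect_eq snd_conv)
      qed
    qed
  qed
  show ?thesis unfolding has_multiplicity_def
    using bij_betw_finite[OF bb] bij_betw_same_card[OF bb] by simp
qed

lemma VV_surj: "VV a b c d (0, - vector [fst v, snd v]) = v"
  by (simp add: Gv0)

lemma allY: "(\<forall>y. Q (VV a b c d y)) \<longleftrightarrow> (\<forall>v. Q v)"
proof
  assume h: "\<forall>y. Q (VV a b c d y)"
  show "\<forall>v. Q v"
  proof
    fix v show "Q v" using h[rule_format, of "(0, - vector [fst v, snd v])"] VV_surj[of a b c d v] by simp
  qed
qed blast

lemma exY: "(\<exists>y. Q (VV a b c d y)) \<longleftrightarrow> (\<exists>v. Q v)"
proof
  assume "\<exists>v. Q v"
  then obtain v where "Q v" by blast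
  then have "Q (VV a b c d (0, - vector [fst v, snd v]))" using VV_surj[of a b c d v] by simp
  then show "\<exists>y. Q (VV a b c d y)" by blast
qed blast

lemma allm_iff: "(\<forall>y. regular_value (Psi (cubicF a b c d)) y \<longrightarrow> has_multiplicity (Psi (cubicF a b c d)) y n)
   \<longleftrightarrow> allm (Gf a b c d) (Df a b c d) {n}"
  unfolding reg_iff mult_iff allm_def using allY[of "\<lambda>v. RegA (Gf a b c d) (Df a b c d) v \<longrightarrow> finite (NA (Gf a b c d) v) \<and> card (NA (Gf a b c d) v) \<in> {n}"]
  by simp

lemma allm04_iff: "(\<forall>y. regular_value (Psi (cubicF a b c d)) y \<longrightarrow> has_multiplicity (Psi (cubicF a b c d)) y 0
     \<or> has_multiplicity (Psi (cubicF a b c d)) y 4)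
   \<longleftrightarrow> allm (Gf a b c d) (Df a b c d) {0,4}"
proof -
  let ?Q = "\<lambda>v. RegA (Gf a b c d) (Df a b c d) v \<longrightarrow> finite (NA (Gf a b c d) v) \<and> card (NA (Gf a b c d) v) \<in> {0,4}"
  have e: "(regular_value (Psi (cubicF a b c d)) y \<longrightarrow> has_multiplicity (Psi (cubicF a b c d)) y 0
     \<or> has_multiplicity (Psi (cubicF a b c d)) y 4) \<longleftrightarrow> ?Q (VV a b c d y)" for y
    unfolding reg_iff mult_iff by blast
  show ?thesis unfolding e allY[of ?Q] allm_def ..
qed

lemma exm_iff: "(\<exists>y. regular_value (Psi (cubicF a b c d)) y \<and> has_multiplicity (Psi (cubicF a b c d)) y n)
   \<longleftrightarrow> exm (Gf a b c d) (Df a b c d) n"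
  unfolding reg_iff mult_iff exm_def using exY[of "\<lambda>v. RegA (Gf a b c d) (Df a b c d) v \<and> finite (NA (Gf a b c d) v) \<and> card (NA (Gf a b c d) v) = n"]
  by simp

lemma zero_iff: "critical_set (Psi (cubicF a b c d)) = zero_section \<longleftrightarrow> crit0 (Df a b c d)"
proof
  assume h: "critical_set (Psi (cubicF a b c d)) = zero_section"
  have "dH a b c d w = 0 \<longleftrightarrow> w = 0" for w
  proof -
    have "(0, w) \<in> critical_set (Psi (cubicF a b c d)) \<longleftrightarrow> (0, w) \<in> zero_section" using h by simp
    then show ?thesis unfolding crit_set zero_section_def by simp
  qed
  then show "crit0 (Df a b c d)" unfolding crit0_def dH_toP
    by (metis toP_vector toP_zero surj_pair)
next
  assume h: "crit0 (Df a b c d)"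
  have "dH a b c d w = 0 \<longleftrightarrow> w = 0" for w
    using h dH0[of a b c d] unfolding crit0_def dH_toP toP_zero[symmetric] by metis
  then show "critical_set (Psi (cubicF a b c d)) = zero_section"
    unfolding crit_set zero_section_def by simp
qed

lemma values_eq: assumes "critical_set (Psi (cubicF a b c d)) = zero_section"
  shows "critical_values (Psi (cubicF a b c d)) = lagr_graph (cubicF a b c d)"
proof -
  have "critical_values (Psi (cubicF a b c d)) = (\<lambda>q. Psi (cubicF a b c d) (q, 0)) ` UNIV"
    unfolding critical_values_def assms zero_section_def by (auto simp: image_iff)
  also have "\<dots> = lagr_graph (cubicF a b c d)"
    unfolding lagr_graph_def Psi_eq gradient_eq by (auto simp: Gv0)
  finally show ?thesis .
qed




lemma allm2_exm0: "allm G D {2} \<Longrightarrow> exm G D 0 \<Longrightarrow> False"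
  unfolding allm_def exm_def by fastforce

theorem mainTheorem4:
  fixes a b c d :: real
  shows
   "((18*a*b*c*d + b^2*c^2 > 4*a*c^3 + 4*b^3*d + 27*a^2*d^2)
        \<longleftrightarrow> critical_set (Psi (cubicF a b c d)) = zero_section)
  \<and> ((18*a*b*c*d + b^2*c^2 > 4*a*c^3 + 4*b^3*d + 27*a^2*d^2)
        \<longleftrightarrow> (\<forall>y. regular_value (Psi (cubicF a b c d)) y
                 \<longrightarrow> has_multiplicity (Psi (cubicF a b c d)) y 2))
  \<and> ((18*a*b*c*d + b^2*c^2 > 4*a*c^3 + 4*b^3*d + 27*a^2*d^2)
        \<longrightarrow> critical_values (Psi (cubicF a b c d)) = lagr_graph (cubicF a b c d))
  \<and> ((18*a*b*c*d + b^2*c^2 < 4*a*c^3 + 4*b^3*d + 27*a^2*d^2)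
        \<longleftrightarrow> ((\<forall>y. regular_value (Psi (cubicF a b c d)) y
                 \<longrightarrow> has_multiplicity (Psi (cubicF a b c d)) y 0
                   \<or> has_multiplicity (Psi (cubicF a b c d)) y 4)
             \<and> (\<exists>y. regular_value (Psi (cubicF a b c d)) y
                    \<and> has_multiplicity (Psi (cubicF a b c d)) y 0)
             \<and> (\<exists>y. regular_value (Psi (cubicF a b c d)) y
                    \<and> has_multiplicity (Psi (cubicF a b c d)) y 4)))
  \<and> ((18*a*b*c*d + b^2*c^2 < 4*a*c^3 + 4*b^3*d + 27*a^2*d^2)
        \<longrightarrow> critical_set (Psi (cubicF a b c d)) \<noteq> zero_section)"
proof -
  have dpos: "(18*a*b*c*d + b^2*c^2 > 4*a*c^3 + 4*b^3*d + 27*a^2*d^2) \<longleftrightarrow> Disc a b c d > 0"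
    unfolding Disc_def by linarith
  have dneg: "(18*a*b*c*d + b^2*c^2 < 4*a*c^3 + 4*b^3*d + 27*a^2*d^2) \<longleftrightarrow> Disc a b c d < 0"
    unfolding Disc_def by linarith
  note G = Good_all[of a b c d]
  have c1: "Disc a b c d > 0 \<longleftrightarrow> crit0 (Df a b c d)" using G unfolding Good_def by auto
  have c2: "Disc a b c d > 0 \<longleftrightarrow> allm (Gf a b c d) (Df a b c d) {2}"
    using G allm2_exm0[of "Gf a b c d" "Df a b c d"] unfolding Good_def by auto
  have c4: "Disc a b c d < 0 \<longleftrightarrow> (allm (Gf a b c d) (Df a b c d) {0,4} \<and> exm (Gf a b c d) (Df a b c d) 0
       \<and> exm (Gf a b c d) (Df a b c d) 4)"
    using G allm2_exm0[of "Gf a b c d" "Df a b c d"] unfolding Good_def by auto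
  show ?thesis
    unfolding dpos dneg zero_iff allm_iff allm04_iff exm_iff
    using c1 c2 c4 values_eq[of a b c d] zero_iff[of a b c d] by auto
qed


end
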